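(* Let $0 \le \alpha < 1$ and let $f = h + \overline{g} \in \mathcal{F}(\alpha)$ with $h(z) = z + \sum_{k=2}^\infty a_k z^k$ and $g(z) = \sum_{k=1}^\infty b_k z^k$. Then for all $n \ge 2$, $$|a_n| \le A_n(\alpha) \quad\text{and}\quad |b_n| \le \frac{n-1}{n-2\alpha}\,A_n(\alpha), \qquad\text{where } A_n(\alpha) = \frac{1}{n!}\prod_{j=2}^n (j - 2\alpha).$$ These bounds are sharp: equality holds in every inequality for the function $f_\alpha = h_\alpha + \overline{g_\alpha} \in \mathcal{F}(\alpha)$ given by $$f_\alpha(z) = \frac{1-(1-z)^{2\alpha-1}}{2\alpha-1} + \overline{\frac{1 - (1-z)^{2\alpha-1}(1 + z(2\alpha-1))}{2\alpha(2\alpha-1)}} \quad (\alpha \ne 0, 1/2),$$ $$f_0(z) = \frac{z}{1-z} + \overline{\frac{z}{1-z} + \log(1-z)}, \qquad f_{1/2}(z) = -\log(1-z) - \overline{\left(z + \log(1-z)\right)},$$ and for its rotations.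
   Context: $\mathbb{D} = \{z \in \mathbb{C} : |z| < 1\}$. For $\alpha \ge -1/2$, $\mathcal{F}(\alpha)$ denotes the set of complex-valued harmonic functions $f = h + \overline{g}$ on $\mathbb{D}$, with $h, g$ analytic in $\mathbb{D}$ normalized by $h(0) = g(0) = 0$, $h'(0) = 1$, such that $\operatorname{Re}\left(1 + \frac{z h''(z)}{h'(z)}\right) > \alpha$ for all $z \in \mathbb{D}$ and, for some real constant $\theta$, $g'(z) = e^{i\theta} z h'(z)$ for all $z \in \mathbb{D}$. Logarithms and powers of $1-z$ use the principal branch on $\mathbb{D}$. *)

theory Defs
  imports "HOL-Analysis.Analysis"
begin

definition taylor_coeff :: "(complex \<Rightarrow> complex) \<Rightarrow> nat \<Rightarrow> complex" where
  "taylor_coeff f n = (deriv ^^ n) f 0 / of_nat (fact n)"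

text \<open>Membership of the harmonic function f = h + conj g in the class F(alpha),
  expressed through its (normalized) analytic and co-analytic parts h, g.\<close>
definition in_F :: "real \<Rightarrow> (complex \<Rightarrow> complex) \<Rightarrow> (complex \<Rightarrow> complex) \<Rightarrow> bool" where
  "in_F \<alpha> h g \<longleftrightarrow>
     h holomorphic_on ball 0 1 \<and> g holomorphic_on ball 0 1 \<and>
     h 0 = 0 \<and> g 0 = 0 \<and> deriv h 0 = 1 \<and>
     (\<forall>z\<in>ball 0 1. deriv h z \<noteq> 0 \<and>
        Re (1 + z * deriv (deriv h) z / deriv h z) > \<alpha>) \<and>
     (\<exists>\<theta>::real. \<forall>z\<in>ball 0 1. deriv g z = exp (\<i> * of_real \<theta>) * z * deriv h z)"

definition A_coef :: "nat \<Rightarrow> real \<Rightarrow> real" where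
  "A_coef n \<alpha> = (\<Prod>j=2..n. real j - 2 * \<alpha>) / fact n"

text \<open>The extremal function f_alpha = h_alpha + conj g_alpha (principal branches).\<close>
definition h_ext :: "real \<Rightarrow> complex \<Rightarrow> complex" where
  "h_ext \<alpha> z =
     (if \<alpha> = 0 then z / (1 - z)
      else if \<alpha> = 1/2 then - Ln (1 - z)
      else (1 - (1 - z) powr of_real (2*\<alpha> - 1)) / of_real (2*\<alpha> - 1))"

definition g_ext :: "real \<Rightarrow> complex \<Rightarrow> complex" where
  "g_ext \<alpha> z =
     (if \<alpha> = 0 then z / (1 - z) + Ln (1 - z)
      else if \<alpha> = 1/2 then - (z + Ln (1 - z))
      else (1 - (1 - z) powr of_real (2*\<alpha> - 1) * (1 + z * of_real (2*\<alpha> - 1)))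
             / of_real (2*\<alpha> * (2*\<alpha> - 1)))"

end

theory Submission
  imports Defs "HOL-Complex_Analysis.Complex_Analysis"
begin


lemma fps_uniq:
  fixes f g :: "complex \<Rightarrow> complex"
  assumes "f has_fps_expansion F" "g has_fps_expansion G" "eventually (\<lambda>z. f z = g z) (nhds 0)"
  shows "F = G"
proof (rule fps_ext)
  fix n
  have "(deriv ^^ n) f 0 = (deriv ^^ n) g 0" by (rule higher_deriv_cong_ev[OF assms(3) refl])
  thus "fps_nth F n = fps_nth G n" using fps_nth_fps_expansion[OF assms(1)] fps_nth_fps_expansion[OF assms(2)] by simp
qed

lemma ball_ev:
  assumes "r > 0" "\<And>z. z \<in> ball 0 r \<Longrightarrow> f z = g z"
  shows "eventually (\<lambda>z. f z = g z) (nhds (0::complex))"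
proof -
  have "eventually (\<lambda>z. z \<in> ball (0::complex) r) (nhds 0)"
    using assms(1) by (intro eventually_nhds_in_open) auto
  thus ?thesis by (rule eventually_mono) (use assms(2) in auto)
qed

lemma hol_fps:
  "f holomorphic_on ball 0 (1::real) \<Longrightarrow> f has_fps_expansion fps_expansion f 0"
  by (rule has_fps_expansion_fps_expansion) auto

lemma taylor_fps: "taylor_coeff f n = fps_nth (fps_expansion f 0) n"
  by (simp add: taylor_coeff_def fps_expansion_def)

lemma fps_scale_exp:
  assumes hol: "f holomorphic_on ball 0 1" and c: "norm c \<le> 1"
  shows "(\<lambda>z. f (c*z)) has_fps_expansion Abs_fps (\<lambda>m. c^m * fps_nth (fps_expansion f 0) m)"
proof -
  have sub: "w \<in> ball 0 1 \<Longrightarrow> c * w \<in> ball 0 1" for w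
    using c by (auto simp: norm_mult intro: le_less_trans[OF mult_right_mono[of "norm c" 1]])
  have h2: "(\<lambda>z. f (c*z)) holomorphic_on ball 0 1"
    using holomorphic_on_compose[of "\<lambda>z. c*z" "ball 0 1" f, unfolded o_def] hol sub
    by (metis holomorphic_on_linear holomorphic_on_subset image_subset_iff)
  have "(\<lambda>z. f (c*z)) has_fps_expansion fps_expansion (\<lambda>z. f (c*z)) 0"
    by (rule hol_fps[OF h2])
  moreover have "fps_expansion (\<lambda>z. f (c*z)) 0 = Abs_fps (\<lambda>m. c^m * fps_nth (fps_expansion f 0) m)"
  proof -
    have "(deriv ^^ n) (\<lambda>w. f (c * w)) 0 = c ^ n * (deriv ^^ n) f 0" for n
    proof -
      have "(deriv ^^ n) (\<lambda>w. f (c * w)) 0 = c ^ n * (deriv ^^ n) f (c * 0)"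
        by (rule higher_deriv_compose_linear[OF hol, of "ball 0 1"]) (use sub in auto)
      thus ?thesis by simp
    qed
    thus ?thesis unfolding fps_expansion_def by simp
  qed
  ultimately show ?thesis by simp
qed

lemma roots_sum:
  fixes k m :: nat assumes "0 < m" "m < k"
  shows "(\<Sum>j<k. (exp (2 * pi * \<i> / of_nat k) ^ m) ^ j) = 0"
proof -
  define w where "w = exp (2 * pi * \<i> / of_nat k) ^ m"
  have wk: "w ^ k = 1"
  proof -
    have "w ^ k = exp (of_nat (m*k) * (2 * pi * \<i> / of_nat k))"
      unfolding w_def by (simp only: power_mult[symmetric] exp_of_nat_mult)
    also have "of_nat (m*k) * (2 * pi * \<i> / of_nat k) = of_nat m * (2 * pi * \<i>)"
      using assms by (simp add: field_simps)
    also have "exp \<dots> = 1" by (simp add: exp_of_nat_mult)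
    finally show ?thesis .
  qed
  have w1: "w \<noteq> 1"
  proof
    assume "w = 1"
    hence "exp (of_nat m * (2 * pi * \<i> / of_nat k)) = 1" unfolding w_def by (simp only: exp_of_nat_mult)
    then obtain n :: int where n: "Im (of_nat m * (2 * pi * \<i> / of_nat k)) = of_int (2*n) * pi"
      by (auto simp: exp_eq_1)
    have "real m / real k * (2*pi) = real_of_int n * (2 * pi)" using n by (simp add: field_simps)
    hence "real m / real k = real_of_int n" by (metis mult_cancel_right pi_neq_zero mult_eq_0_iff zero_neq_numeral)
    hence "real m = real_of_int n * real k" using assms by (simp add: field_simps)
    hence eq: "int m = n * int k" by (metis of_int_eq_iff of_int_mult of_int_of_nat_eq)
    show False
    proof (cases "n \<le> 0")
      case True thus False using eq assms by (smt (verit) mult_nonpos_nonneg of_nat_0_le_iff of_nat_0_less_iff)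
    next
      case False hence "n \<ge> 1" by simp
      hence "n * int k \<ge> int k" using mult_right_mono[of 1 n "int k"] by simp
      thus False using eq assms by linarith
    qed
  qed
  show ?thesis using sum_gp_strict[of w k] w1 wk by (simp add: w_def)
qed

lemma norm_lt_Re:
  fixes a :: complex assumes "Re a > 0"
  shows "norm (a - 1) < norm (a + 1)"
proof -
  have "(norm (a - 1))^2 < (norm (a+1))^2"
    using assms unfolding cmod_power2 by (simp add: power2_eq_square algebra_simps)
  thus ?thesis by (simp add: power_less_imp_less_base)
qed

lemma caratheodory:
  fixes p :: "complex \<Rightarrow> complex"
  assumes holp: "p holomorphic_on ball 0 1" and p0: "p 0 = 1"
    and re: "\<And>z. z \<in> ball 0 1 \<Longrightarrow> Re (p z) > 0" and k: "k \<ge> 1"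
  shows "norm (fps_nth (fps_expansion p 0) k) \<le> 2"
proof -
  define \<omega> where "\<omega> = exp (2 * pi * \<i> / of_nat k)"
  have n\<omega>: "norm (\<omega>^j) = 1" for j by (simp add: \<omega>_def norm_power norm_exp_eq_Re)
  define pf where "pf = fps_expansion p 0"
  define P where "P z = (1 / of_nat k) * (\<Sum>j<k. p (\<omega>^j * z))" for z
  have Pexp: "P has_fps_expansion fps_const (1/of_nat k) * (\<Sum>j<k. Abs_fps (\<lambda>m. (\<omega>^j)^m * pf$m))"
    unfolding P_def pf_def
    by (intro has_fps_expansion_cmult_left has_fps_expansion_sum fps_scale_exp holp) (simp add: n\<omega>)
  define Pf where "Pf = fps_const (1/of_nat k) * (\<Sum>j<k. Abs_fps (\<lambda>m. (\<omega>^j)^m * pf$m))"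
  have Pf_nth: "Pf $ m = pf $ m * ((1/of_nat k) * (\<Sum>j<k. (\<omega>^m)^j))" for m
    unfolding Pf_def by (simp add: fps_sum_nth sum_distrib_left sum_distrib_right power_mult[symmetric] mult.commute mult.left_commute)
  have Pf_mid: "Pf $ m = 0" if "0 < m" "m < k" for m
    using roots_sum[OF that] by (simp add: Pf_nth \<omega>_def)
  have \<omega>k: "\<omega> ^ k = 1"
  proof -
    have "\<omega> ^ k = exp (of_nat k * (2 * pi * \<i> / of_nat k))" by (simp only: \<omega>_def exp_of_nat_mult)
    also have "\<dots> = exp (2 * pi * \<i>)" using k by simp
    finally show ?thesis by simp
  qed
  have Pf_k: "Pf $ k = pf $ k" using k by (simp add: Pf_nth \<omega>k)
  have memb: "\<omega>^j * z \<in> ball 0 1" if "z \<in> ball 0 1" for z j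
    using that by (simp add: norm_mult n\<omega>)
  have holP: "P holomorphic_on ball 0 1"
    unfolding P_def
    by (intro holomorphic_intros holomorphic_on_compose[OF _ holomorphic_on_subset[OF holp], unfolded o_def]) (use memb in \<open>auto simp: norm_mult n\<omega>\<close>)
  have P0: "P 0 = 1" using k by (simp add: P_def p0)
  have ReP: "Re (P z) > 0" if "z \<in> ball 0 1" for z
  proof -
    have "(\<Sum>j<k. Re (p (\<omega>^j * z))) > 0"
      using k by (intro sum_pos) (auto intro: re memb that simp: lessThan_empty_iff)
    thus ?thesis using k by (simp add: P_def Re_sum)
  qed
  define W where "W z = (P z - 1) / (P z + 1)" for z
  have P1: "P z + 1 \<noteq> 0" if "z \<in> ball 0 1" for z
    using ReP[OF that] by (metis add.right_neutral add_less_same_cancel1 less_add_same_cancel1 not_less_iff_gr_or_eq one_complex.simps(1) plus_complex.simps(1) zero_complex.sel(1) less_numeral_extra(1) add_cancel_right_left)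
  have holW: "W holomorphic_on ball 0 1"
    unfolding W_def by (intro holomorphic_intros holP) (use P1 in auto)
  have nW: "norm (W z) < 1" if "z \<in> ball 0 1" for z
    using norm_lt_Re[OF ReP[OF that]] P1[OF that] by (simp add: W_def norm_divide divide_less_eq)
  define Wf where "Wf = fps_expansion W 0"
  have Wexp: "W has_fps_expansion Wf" unfolding Wf_def by (rule hol_fps[OF holW])
  have Pexp': "P has_fps_expansion Pf" using Pexp unfolding Pf_def .
  have feq: "Pf - fps_const 1 = Wf * (Pf + fps_const 1)"
  proof (rule fps_uniq)
    show "(\<lambda>z. P z - 1) has_fps_expansion Pf - fps_const 1"
      by (intro has_fps_expansion_diff Pexp' has_fps_expansion_const)
    show "(\<lambda>z. W z * (P z + 1)) has_fps_expansion Wf * (Pf + fps_const 1)"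
      by (intro has_fps_expansion_mult has_fps_expansion_add Pexp' Wexp has_fps_expansion_const)
    show "\<forall>\<^sub>F z in nhds 0. P z - 1 = W z * (P z + 1)"
      by (rule ball_ev[of 1]) (use P1 in \<open>auto simp: W_def\<close>)
  qed
  have Pf0: "Pf $ 0 = 1"
    using fps_nth_fps_expansion[OF Pexp', of 0] P0 by simp
  have sumsplit: "(\<Sum>i=0..m. Wf $ i * (Pf + fps_const 1) $ (m - i)) = Wf $ m * 2"
    if "\<And>i. i < m \<Longrightarrow> Wf $ i = 0" for m
  proof -
    have "{0..m} = insert m {..<m}" by auto
    hence "(\<Sum>i=0..m. Wf $ i * (Pf + fps_const 1) $ (m - i)) = Wf $ m * (Pf + fps_const 1) $ 0 + (\<Sum>i<m. Wf $ i * (Pf + fps_const 1) $ (m - i))"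
      by simp
    also have "(\<Sum>i<m. Wf $ i * (Pf + fps_const 1) $ (m - i)) = 0" using that by simp
    finally show ?thesis by (simp add: Pf0)
  qed
  have Wzero: "\<forall>i<m. Wf $ i = 0" if "m \<le> k" for m
    using that
  proof (induction m)
    case 0 thus ?case by simp
  next
    case (Suc m)
    hence IH: "\<And>i. i < m \<Longrightarrow> Wf $ i = 0" and mk: "m < k" by auto
    have "(Pf - fps_const 1) $ m = 0"
      using Pf0 Pf_mid[of m] mk by (cases "m = 0") auto
    hence "(Wf * (Pf + fps_const 1)) $ m = 0" by (simp only: feq)
    hence "Wf $ m * 2 = 0" by (simp only: fps_mult_nth sumsplit[OF IH])
    hence "Wf $ m = 0" by simp
    thus ?case using IH less_Suc_eq by auto
  qed
  have "pf $ k = (Pf - fps_const 1) $ k" using Pf_k k by simp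
  also have "\<dots> = (Wf * (Pf + fps_const 1)) $ k" by (simp only: feq)
  also have "\<dots> = Wf $ k * 2" using Wzero[of k] by (simp only: fps_mult_nth sumsplit)
  finally have "pf $ k = Wf $ k * 2" .
  moreover have "norm (Wf $ k) \<le> 1"
  proof (rule field_le_mult_one_interval)
    fix s :: real assume s: "0 < s" "s < 1"
    define r where "r = root k s"
    have r: "0 < r" "r < 1" "r ^ k = s" using s k by (auto simp: r_def)
    have "norm ((deriv ^^ k) W 0) \<le> fact k * 1 / r ^ k"
    proof (rule Cauchy_higher_deriv_bound[where y=0])
      show "W holomorphic_on ball 0 r" using holW r by (auto intro: holomorphic_on_subset)
      show "continuous_on (cball 0 r) W"
        using holW r by (intro holomorphic_on_imp_continuous_on) (auto intro: holomorphic_on_subset)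
      show "\<And>w. w \<in> ball 0 r \<Longrightarrow> W w \<in> ball 0 1" using nW r by auto
    qed (use r k in auto)
    moreover have "(deriv ^^ k) W 0 = fact k * Wf $ k" using fps_nth_fps_expansion[OF Wexp, of k] by simp
    ultimately have "fact k * norm (Wf $ k) \<le> fact k * (1 / r ^ k)" by (simp add: norm_mult)
    hence "norm (Wf $ k) \<le> 1 / r ^ k" by (rule mult_left_le_imp_le) simp
    thus "s * norm (Wf $ k) \<le> 1" using r s by (simp add: field_simps)
  qed
  ultimately show ?thesis unfolding pf_def by (simp add: norm_mult)
qed

lemma A_coef_1: "A_coef 1 \<alpha> = 1"
  by (simp add: A_coef_def)

lemma A_coef_Suc:
  assumes "n \<ge> 1"
  shows "A_coef (Suc n) \<alpha> = A_coef n \<alpha> * (real (Suc n) - 2*\<alpha>) / real (Suc n)"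
proof -
  have "(\<Prod>j=2..Suc n. real j - 2 * \<alpha>) = (real (Suc n) - 2*\<alpha>) * (\<Prod>j=2..n. real j - 2 * \<alpha>)"
    using assms by (subst prod.nat_ivl_Suc') auto
  thus ?thesis unfolding A_coef_def by (simp add: field_simps)
qed

lemma A_coef_pos:
  assumes "\<alpha> < 1" "n \<ge> 1"
  shows "A_coef n \<alpha> > 0"
  unfolding A_coef_def using assms
  by (intro divide_pos_pos prod_pos) auto

lemma A_sum:
  assumes "n \<ge> 1"
  shows "2*(1-\<alpha>) * (\<Sum>j=1..<n. real j * A_coef j \<alpha>) = (real n - 1) * real n * A_coef n \<alpha>"
  using assms
proof (induction n rule: dec_induct)
  case base thus ?case by simp
next
  case (step n)
  have "2*(1-\<alpha>) * (\<Sum>j=1..<Suc n. real j * A_coef j \<alpha>) =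
        (real n - 1) * real n * A_coef n \<alpha> + 2*(1-\<alpha>) * real n * A_coef n \<alpha>"
    using step by (simp add: algebra_simps)
  also have "\<dots> = real n * (real n + 1 - 2*\<alpha>) * A_coef n \<alpha>" by (simp add: algebra_simps)
  also have "\<dots> = (real (Suc n) - 1) * real (Suc n) * A_coef (Suc n) \<alpha>"
  proof -
    have "A_coef (Suc n) \<alpha> * real (Suc n) = A_coef n \<alpha> * (real (Suc n) - 2*\<alpha>)"
      using A_coef_Suc[OF step(1), of \<alpha>] by (simp add: field_simps)
    hence "real n * (A_coef (Suc n) \<alpha> * real (Suc n)) = real n * (A_coef n \<alpha> * (real (Suc n) - 2*\<alpha>))" by simp
    thus ?thesis by (simp add: algebra_simps)
  qed
  finally show ?case .
qed

lemma h_bound: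
  assumes F: "in_F \<alpha> h g" and a0: "0 \<le> \<alpha>" and a1: "\<alpha> < 1"
  shows "\<forall>n\<ge>1. norm (fps_nth (fps_expansion h 0) n) \<le> A_coef n \<alpha>"
proof -
  from F have holh: "h holomorphic_on ball 0 1" and dh0: "deriv h 0 = 1"
    and nz: "\<And>z. z \<in> ball 0 1 \<Longrightarrow> deriv h z \<noteq> 0"
    and reh: "\<And>z. z \<in> ball 0 1 \<Longrightarrow> Re (1 + z * deriv (deriv h) z / deriv h z) > \<alpha>"
    unfolding in_F_def by auto
  define H where "H = fps_expansion h 0"
  have Hexp: "h has_fps_expansion H" unfolding H_def by (rule hol_fps[OF holh])
  define q where "q z = z * deriv (deriv h) z / deriv h z" for z
  have holq: "q holomorphic_on ball 0 1"
    unfolding q_def by (intro holomorphic_intros holh) (use nz in auto)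
  define p where "p z = (q z + of_real (1 - \<alpha>)) / of_real (1 - \<alpha>)" for z
  have holp: "p holomorphic_on ball 0 1"
    unfolding p_def using a1 by (intro holomorphic_intros holq) auto
  have p0: "p 0 = 1" using a1 by (simp add: p_def q_def)
  have rep: "Re (p z) > 0" if "z \<in> ball 0 1" for z
  proof -
    have "Re (q z) + (1 - \<alpha>) > 0" using reh[OF that] by (simp add: q_def)
    thus ?thesis using a1 by (simp add: p_def divide_pos_pos)
  qed
  define pf where "pf = fps_expansion p 0"
  have pfb: "norm (pf $ k) \<le> 2" if "k \<ge> 1" for k
    unfolding pf_def by (rule caratheodory[OF holp p0 rep that]) auto
  define Qf where "Qf = fps_expansion q 0"
  have Qexp: "q has_fps_expansion Qf" unfolding Qf_def by (rule hol_fps[OF holq])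
  have Qf_eq: "Qf = fps_const (of_real (1-\<alpha>)) * pf - fps_const (of_real (1-\<alpha>))"
  proof (rule fps_uniq[OF Qexp])
    show "(\<lambda>z. of_real (1-\<alpha>) * p z - of_real (1-\<alpha>)) has_fps_expansion fps_const (of_real (1-\<alpha>)) * pf - fps_const (of_real (1-\<alpha>))"
      unfolding pf_def by (intro has_fps_expansion_diff has_fps_expansion_cmult_left hol_fps[OF holp] has_fps_expansion_const)
    show "\<forall>\<^sub>F z in nhds 0. q z = of_real (1-\<alpha>) * p z - of_real (1-\<alpha>)"
      by (rule ball_ev[of 1]) (use a1 in \<open>auto simp: p_def field_simps\<close>)
  qed
  have Qb: "norm (Qf $ k) \<le> 2 * (1 - \<alpha>)" if "k \<ge> 1" for k
  proof -
    have "Qf $ k = of_real (1-\<alpha>) * pf $ k" using that by (simp add: Qf_eq del: of_real_diff)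
    hence "norm (Qf $ k) = \<bar>1-\<alpha>\<bar> * norm (pf $ k)" by (simp only: norm_mult norm_of_real)
    moreover have "(1-\<alpha>) * norm (pf $ k) \<le> (1-\<alpha>) * 2" using pfb[OF that] a1 by (intro mult_left_mono) auto
    ultimately show ?thesis using a1 by (simp add: mult.commute)
  qed
  have Q0: "Qf $ 0 = 0"
    using fps_nth_fps_expansion[OF Qexp, of 0] by (simp add: q_def)
  have rel: "fps_X * fps_deriv (fps_deriv H) = Qf * fps_deriv H"
  proof (rule fps_uniq)
    show "(\<lambda>z. z * deriv (deriv h) z) has_fps_expansion fps_X * fps_deriv (fps_deriv H)"
      by (intro has_fps_expansion_mult has_fps_expansion_fps_X has_fps_expansion_deriv Hexp)
    show "(\<lambda>z. q z * deriv h z) has_fps_expansion Qf * fps_deriv H"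
      by (intro has_fps_expansion_mult has_fps_expansion_deriv Hexp Qexp)
    show "\<forall>\<^sub>F z in nhds 0. z * deriv (deriv h) z = q z * deriv h z"
      by (rule ball_ev[of 1]) (use nz in \<open>auto simp: q_def\<close>)
  qed
  have H1: "H $ 1 = 1" using fps_nth_fps_expansion[OF Hexp, of 1] dh0 by simp
  show ?thesis unfolding H_def[symmetric]
  proof (intro allI impI)
    fix n :: nat assume "n \<ge> 1"
    thus "norm (H $ n) \<le> A_coef n \<alpha>"
    proof (induction n rule: less_induct)
      case (less n)
      show ?case
      proof (cases "n = 1")
        case True thus ?thesis using H1 A_coef_1[of \<alpha>] by simp
      next
        case False
        hence n2: "n \<ge> 2" using less.prems by auto
        have "of_nat (n-1) * of_nat n * H $ n = (fps_X * fps_deriv (fps_deriv H)) $ (n - 1)"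
          using n2 by (simp add: Suc_diff_Suc numeral_2_eq_2 mult.assoc)
        also have "\<dots> = (Qf * fps_deriv H) $ (n - 1)" by (simp only: rel)
        also have "\<dots> = (\<Sum>i=0..n-1. Qf $ i * (of_nat (n - i) * H $ (n - i)))"
          unfolding fps_mult_nth using n2 by (intro sum.cong refl) (simp, subst Suc_diff_Suc, auto)
        also have "\<dots> = (\<Sum>i=1..<n. Qf $ i * (of_nat (n - i) * H $ (n - i)))"
        proof -
          have "{0..n-1} = insert 0 {1..<n}" using n2 by auto
          thus ?thesis by (simp add: Q0)
        qed
        finally have eq: "of_nat (n-1) * of_nat n * H $ n = (\<Sum>i=1..<n. Qf $ i * (of_nat (n - i) * H $ (n - i)))" .
        have "(real n - 1) * real n * norm (H $ n) = norm (of_nat (n-1) * of_nat n * H $ n)"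
        proof -
          have "norm (of_nat (n-1) * of_nat n * H $ n :: complex) = real (n-1) * real n * norm (H $ n)"
            by (simp only: norm_mult norm_of_nat)
          thus ?thesis using n2 by (simp add: of_nat_diff)
        qed
        also have "\<dots> \<le> (\<Sum>i=1..<n. norm (Qf $ i * (of_nat (n - i) * H $ (n - i))))"
          unfolding eq by (rule norm_sum)
        also have "\<dots> \<le> (\<Sum>i=1..<n. 2 * (1 - \<alpha>) * (real (n - i) * A_coef (n - i) \<alpha>))"
        proof (rule sum_mono)
          fix i assume i: "i \<in> {1..<n}"
          have "norm (H $ (n - i)) \<le> A_coef (n - i) \<alpha>" using i by (intro less.IH) auto
          hence "real (n - i) * norm (H $ (n - i)) \<le> real (n - i) * A_coef (n - i) \<alpha>"
            by (intro mult_left_mono) auto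
          moreover have "norm (Qf $ i) \<le> 2 * (1 - \<alpha>)" using i by (intro Qb) auto
          ultimately show "norm (Qf $ i * (of_nat (n - i) * H $ (n - i))) \<le> 2 * (1 - \<alpha>) * (real (n - i) * A_coef (n - i) \<alpha>)"
          proof -
            have eqn: "norm (Qf $ i * (of_nat (n - i) * H $ (n - i))) = norm (Qf $ i) * (real (n - i) * norm (H $ (n - i)))"
              by (simp only: norm_mult norm_of_nat)
            show ?thesis unfolding eqn
              by (rule mult_mono) (use \<open>real (n - i) * norm (H $ (n - i)) \<le> _\<close> \<open>norm (Qf $ i) \<le> _\<close> a1 in auto)
          qed
        qed
        also have "\<dots> = 2 * (1 - \<alpha>) * (\<Sum>i=1..<n. real (n - i) * A_coef (n - i) \<alpha>)"
          by (simp add: sum_distrib_left)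
        also have "(\<Sum>i=1..<n. real (n - i) * A_coef (n - i) \<alpha>) = (\<Sum>j=1..<n. real j * A_coef j \<alpha>)"
          by (subst (2) sum.atLeastLessThan_rev) (simp add: Suc_diff_Suc)
        also have "2 * (1 - \<alpha>) * \<dots> = (real n - 1) * real n * A_coef n \<alpha>"
          using A_sum[of n \<alpha>] n2 by simp
        finally have "(real n - 1) * real n * norm (H $ n) \<le> (real n - 1) * real n * A_coef n \<alpha>" .
        moreover have "(real n - 1) * real n > 0" using n2 by simp
        ultimately show ?thesis by (meson mult_le_cancel_left_pos)
      qed
    qed
  qed
qed

lemma g_bound:
  assumes F: "in_F \<alpha> h g" and a0: "0 \<le> \<alpha>" and a1: "\<alpha> < 1" and n2: "n \<ge> 2"
  shows "norm (fps_nth (fps_expansion g 0) n) \<le> (real n - 1) / (real n - 2 * \<alpha>) * A_coef n \<alpha>"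
proof -
  from F have holh: "h holomorphic_on ball 0 1" and holg: "g holomorphic_on ball 0 1"
    unfolding in_F_def by auto
  from F obtain \<theta> :: real where th: "\<And>z. z \<in> ball 0 1 \<Longrightarrow> deriv g z = exp (\<i> * of_real \<theta>) * z * deriv h z"
    unfolding in_F_def by blast
  define c where "c = exp (\<i> * of_real \<theta>)"
  have nc: "norm c = 1" by (simp add: c_def norm_exp_eq_Re)
  define H where "H = fps_expansion h 0"
  define G where "G = fps_expansion g 0"
  have Hexp: "h has_fps_expansion H" unfolding H_def by (rule hol_fps[OF holh])
  have Gexp: "g has_fps_expansion G" unfolding G_def by (rule hol_fps[OF holg])
  have rel: "fps_deriv G = fps_const c * (fps_X * fps_deriv H)"
  proof (rule fps_uniq)
    show "deriv g has_fps_expansion fps_deriv G" by (intro has_fps_expansion_deriv Gexp)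
    show "(\<lambda>z. c * (z * deriv h z)) has_fps_expansion fps_const c * (fps_X * fps_deriv H)"
      by (intro has_fps_expansion_cmult_left has_fps_expansion_mult has_fps_expansion_fps_X has_fps_expansion_deriv Hexp)
    show "\<forall>\<^sub>F z in nhds 0. deriv g z = c * (z * deriv h z)"
      by (rule ball_ev[of 1]) (auto simp: th c_def mult.assoc)
  qed
  have "of_nat n * G $ n = (fps_deriv G) $ (n - 1)" using n2 by simp
  also have "\<dots> = (fps_const c * (fps_X * fps_deriv H)) $ (n - 1)" by (simp only: rel)
  also have "\<dots> = c * (of_nat (n - 1) * H $ (n - 1))"
    using n2 by (simp add: Suc_diff_Suc numeral_2_eq_2)
  finally have eq: "of_nat n * G $ n = c * (of_nat (n - 1) * H $ (n - 1))" .
  have "real n * norm (G $ n) = real (n - 1) * norm (H $ (n - 1))"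
  proof -
    have "norm (of_nat n * G $ n) = norm (c * (of_nat (n - 1) * H $ (n - 1)))" by (simp only: eq)
    thus ?thesis by (simp only: norm_mult norm_of_nat nc mult_1_left)
  qed
  also have "\<dots> \<le> real (n - 1) * A_coef (n - 1) \<alpha>"
    using h_bound[OF F a0 a1] n2 unfolding H_def by (intro mult_left_mono) auto
  finally have b: "real n * norm (G $ n) \<le> real (n - 1) * A_coef (n - 1) \<alpha>" .
  have An: "A_coef n \<alpha> = A_coef (n - 1) \<alpha> * (real n - 2*\<alpha>) / real n"
    using A_coef_Suc[of "n-1" \<alpha>] n2 by (simp add: of_nat_diff)
  have pos: "real n - 2 * \<alpha> > 0" using n2 a1 by simp
  have "(real n - 1) / (real n - 2 * \<alpha>) * A_coef n \<alpha> = real (n - 1) * A_coef (n - 1) \<alpha> / real n"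
    unfolding An using pos n2 by (simp add: of_nat_diff field_simps)
  moreover have "norm (G $ n) \<le> real (n - 1) * A_coef (n - 1) \<alpha> / real n"
    using b n2 by (simp add: pos_le_divide_eq mult.commute)
  ultimately show ?thesis unfolding G_def by simp
qed

definition expo :: "real \<Rightarrow> complex" where "expo a = of_real (2*a - 2)"

definition Ef :: "real \<Rightarrow> complex \<Rightarrow> complex" where
  "Ef a z = (1 - z) powr expo a"

lemma slit: "(z::complex) \<in> ball 0 1 \<Longrightarrow> 1 - z \<notin> \<real>\<^sub>\<le>\<^sub>0"
proof -
  assume "z \<in> ball 0 1"
  hence "Re z < 1" using complex_Re_le_cmod[of z] by auto
  thus ?thesis by (auto simp: complex_nonpos_Reals_iff)
qed

lemma nz1: "(z::complex) \<in> ball 0 1 \<Longrightarrow> 1 - z \<noteq> 0"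
proof -
  assume "z \<in> ball 0 1"
  hence "z \<noteq> 1" by auto
  thus ?thesis by simp
qed

lemma powr_shift: "(w::complex) \<noteq> 0 \<Longrightarrow> w powr c = w * w powr (c - 1)"
  using powr_add[of w "c - 1" 1] by (simp add: mult.commute)

lemma powr_deriv:
  fixes z s :: complex
  assumes "z \<in> ball 0 1"
  shows "((\<lambda>z. (1 - z) powr s) has_field_derivative - (s * (1 - z) powr (s - 1))) (at z)"
proof -
  have "((\<lambda>z. (1 - z) powr s) has_field_derivative (s * (1 - z) powr (s - 1)) * (-1)) (at z)"
    by (rule DERIV_chain2[where f="\<lambda>w. w powr s" and g="\<lambda>z. 1 - z", OF has_field_derivative_powr[OF slit[OF assms]]])
       (intro derivative_eq_intros, auto)
  thus ?thesis by simp
qed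

lemma Ef_deriv:
  assumes "z \<in> ball 0 1"
  shows "(Ef a has_field_derivative of_real (2 - 2*a) * Ef a z / (1 - z)) (at z)"
proof -
  have "(Ef a has_field_derivative - (expo a * (1 - z) powr (expo a - 1))) (at z)"
    unfolding Ef_def[abs_def] by (rule powr_deriv[OF assms])
  moreover have "- (expo a * (1 - z) powr (expo a - 1)) = of_real (2 - 2*a) * Ef a z / (1 - z)"
  proof -
    define X where "X = (1 - z) powr (expo a - 1)"
    have EfX: "Ef a z = (1 - z) * X"
      unfolding Ef_def X_def by (rule powr_shift[OF nz1[OF assms]])
    have ex: "expo a = - of_real (2 - 2*a)" by (simp add: expo_def)
    have "of_real (2 - 2*a) * ((1 - z) * X) / (1 - z) = of_real (2 - 2*a) * X"
      by (metis mult.left_commute nonzero_mult_div_cancel_left nz1[OF assms])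
    thus ?thesis unfolding X_def[symmetric] unfolding EfX ex by (simp add: algebra_simps)
  qed
  ultimately show ?thesis by simp
qed

lemma Ef0: "Ef a 0 = 1" by (simp add: Ef_def)
lemma Ef_nz: "z \<in> ball 0 1 \<Longrightarrow> Ef a z \<noteq> 0"
  using nz1 by (simp add: Ef_def powr_def)

lemma h_ext_deriv:
  assumes "z \<in> ball 0 1"
  shows "(h_ext a has_field_derivative Ef a z) (at z)"
proof -
  have sl: "1 - z \<notin> \<real>\<^sub>\<le>\<^sub>0" using slit[OF assms] .
  have nz: "1 - z \<noteq> 0" using nz1[OF assms] .
  consider "a = 0" | "a = 1/2" | "a \<noteq> 0" "a \<noteq> 1/2" by blast
  thus ?thesis
  proof cases
    case 1
    have "((\<lambda>z. z / (1 - z)) has_field_derivative (1 * (1 - z) - z * (0 - 1)) / ((1 - z) * (1 - z))) (at z)"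
      by (intro DERIV_divide DERIV_diff DERIV_const DERIV_ident nz)
    moreover have "(1 * (1 - z) - z * (0 - 1)) / ((1 - z) * (1 - z)) = Ef a z"
      using 1 nz by (simp add: Ef_def expo_def powr_minus divide_inverse power2_eq_square)
    ultimately show ?thesis unfolding h_ext_def[abs_def] using 1 by simp
  next
    case 2
    have "((\<lambda>z. - Ln (1 - z)) has_field_derivative - (inverse (1 - z) * (0 - 1))) (at z)"
      by (intro DERIV_minus DERIV_chain2[where f=Ln and g="\<lambda>z. 1 - z", OF has_field_derivative_Ln[OF sl]] DERIV_diff DERIV_const DERIV_ident)
    moreover have "- (inverse (1 - z) * (0 - 1)) = Ef a z"
    proof -
      have "expo a = - 1" unfolding 2 expo_def by simp
      thus ?thesis by (simp add: Ef_def powr_minus)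
    qed
    ultimately show ?thesis unfolding h_ext_def[abs_def] 2 by simp
  next
    case 3
    define C where "C = (of_real (2*a - 1) :: complex)"
    have C0: "C \<noteq> 0" unfolding C_def of_real_eq_0_iff using 3 by simp
    have "((\<lambda>z. (1 - (1 - z) powr C) / C) has_field_derivative
            (0 - - (C * (1 - z) powr (C - 1))) / C) (at z)"
      by (intro DERIV_cdivide DERIV_diff DERIV_const powr_deriv assms)
    moreover have "(0 - - (C * (1 - z) powr (C - 1))) / C = Ef a z"
      using C0 by (simp add: Ef_def C_def expo_def)
    ultimately show ?thesis unfolding h_ext_def[abs_def] using 3 by (simp add: C_def)
  qed
qed

lemma alg0: "(w::complex) \<noteq> 0 \<Longrightarrow> (1*w - (1-w)*(0-1))/(w*w) + inverse w * (0-1) = (1-w) * inverse (w^2)"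
  by (simp add: field_simps power2_eq_square)

lemma alg1: "(w::complex) \<noteq> 0 \<Longrightarrow> - (1 + inverse w * (0-1)) = (1-w) * inverse w"
  by (simp add: field_simps)

lemma g_ext_deriv:
  assumes "z \<in> ball 0 1"
  shows "(g_ext a has_field_derivative z * Ef a z) (at z)"
proof -
  have sl: "1 - z \<notin> \<real>\<^sub>\<le>\<^sub>0" using slit[OF assms] .
  have nz: "1 - z \<noteq> 0" using nz1[OF assms] .
  consider "a = 0" | "a = 1/2" | "a \<noteq> 0" "a \<noteq> 1/2" by blast
  thus ?thesis
  proof cases
    case 1
    have "((\<lambda>z. z / (1 - z) + Ln (1 - z)) has_field_derivative
        (1 * (1 - z) - z * (0 - 1)) / ((1 - z) * (1 - z)) + inverse (1 - z) * (0 - 1)) (at z)"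
      by (intro DERIV_add DERIV_divide DERIV_diff DERIV_const DERIV_ident nz
          DERIV_chain2[where f=Ln and g="\<lambda>z. 1 - z", OF has_field_derivative_Ln[OF sl]])
    moreover have "(1 * (1 - z) - z * (0 - 1)) / ((1 - z) * (1 - z)) + inverse (1 - z) * (0 - 1) = z * Ef a z"
    proof -
      have "expo a = - 2" unfolding 1 expo_def by simp
      hence "Ef a z = inverse ((1 - z)^2)" by (simp add: Ef_def powr_minus)
      thus ?thesis using alg0[OF nz] by simp
    qed
    ultimately show ?thesis unfolding g_ext_def[abs_def] 1 by simp
  next
    case 2
    have "((\<lambda>z. - (z + Ln (1 - z))) has_field_derivative - (1 + inverse (1 - z) * (0 - 1))) (at z)"
      by (intro DERIV_minus DERIV_add DERIV_ident DERIV_chain2[where f=Ln and g="\<lambda>z. 1 - z", OF has_field_derivative_Ln[OF sl]] DERIV_diff DERIV_const)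
    moreover have "- (1 + inverse (1 - z) * (0 - 1)) = z * Ef a z"
    proof -
      have "expo a = - 1" unfolding 2 expo_def by simp
      hence "Ef a z = inverse (1 - z)" by (simp add: Ef_def powr_minus)
      thus ?thesis using alg1[OF nz] by simp
    qed
    ultimately show ?thesis unfolding g_ext_def[abs_def] 2 by simp
  next
    case 3
    define C where "C = (of_real (2*a - 1) :: complex)"
    define D where "D = (of_real (2*a * (2*a - 1)) :: complex)"
    have C0: "C \<noteq> 0" unfolding C_def of_real_eq_0_iff using 3 by simp
    have D0: "D \<noteq> 0" unfolding D_def of_real_eq_0_iff using 3 by simp
    have DC: "D = (C + 1) * C" unfolding C_def D_def by (simp add: algebra_simps)
    have "((\<lambda>z. (1 - (1 - z) powr C * (1 + z * C)) / D) has_field_derivative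
            (0 - (- (C * (1 - z) powr (C - 1)) * (1 + z * C) + (0 + 1 * C) * (1 - z) powr C)) / D) (at z)"
      by (intro DERIV_cdivide DERIV_diff DERIV_const DERIV_mult DERIV_add DERIV_cmult_right DERIV_ident powr_deriv assms)
    moreover have "(0 - (- (C * (1 - z) powr (C - 1)) * (1 + z * C) + (0 + 1 * C) * (1 - z) powr C)) / D = z * Ef a z"
    proof -
      define Y where "Y = (1 - z) powr (C - 1)"
      have PY: "(1 - z) powr C = (1 - z) * Y" unfolding Y_def by (rule powr_shift[OF nz])
      have EY: "Ef a z = Y" unfolding Y_def Ef_def C_def expo_def by (simp add: algebra_simps)
      have "(0 - (- (C * Y) * (1 + z * C) + (0 + 1 * C) * ((1 - z) * Y))) = z * Y * ((C + 1) * C)"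
        by (simp add: algebra_simps)
      thus ?thesis unfolding Y_def[symmetric] unfolding PY EY DC using C0 3
        by (simp add: C_def)
    qed
    ultimately show ?thesis unfolding g_ext_def[abs_def] using 3 by (simp add: C_def D_def)
  qed
qed

lemma taylor_exp: "f has_fps_expansion F \<Longrightarrow> taylor_coeff f n = fps_nth F n"
  using fps_nth_fps_expansion[of f F n] by (simp add: taylor_coeff_def)

lemma g_coeff_eq:
  assumes F: "in_F \<alpha> h g" and n2: "n \<ge> 2"
  shows "real n * norm (taylor_coeff g n) = real (n - 1) * norm (taylor_coeff h (n - 1))"
proof -
  from F have holh: "h holomorphic_on ball 0 1" and holg: "g holomorphic_on ball 0 1"
    unfolding in_F_def by auto
  from F obtain \<theta> :: real where th: "\<And>z. z \<in> ball 0 1 \<Longrightarrow> deriv g z = exp (\<i> * of_real \<theta>) * z * deriv h z"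
    unfolding in_F_def by blast
  define c where "c = exp (\<i> * of_real \<theta>)"
  have nc: "norm c = 1" by (simp add: c_def norm_exp_eq_Re)
  define H where "H = fps_expansion h 0"
  define G where "G = fps_expansion g 0"
  have Hexp: "h has_fps_expansion H" unfolding H_def by (rule hol_fps[OF holh])
  have Gexp: "g has_fps_expansion G" unfolding G_def by (rule hol_fps[OF holg])
  have rel: "fps_deriv G = fps_const c * (fps_X * fps_deriv H)"
  proof (rule fps_uniq)
    show "deriv g has_fps_expansion fps_deriv G" by (intro has_fps_expansion_deriv Gexp)
    show "(\<lambda>z. c * (z * deriv h z)) has_fps_expansion fps_const c * (fps_X * fps_deriv H)"
      by (intro has_fps_expansion_cmult_left has_fps_expansion_mult has_fps_expansion_fps_X has_fps_expansion_deriv Hexp)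
    show "\<forall>\<^sub>F z in nhds 0. deriv g z = c * (z * deriv h z)"
      by (rule ball_ev[of 1]) (auto simp: th c_def mult.assoc)
  qed
  have "of_nat n * G $ n = (fps_deriv G) $ (n - 1)" using n2 by simp
  also have "\<dots> = (fps_const c * (fps_X * fps_deriv H)) $ (n - 1)" by (simp only: rel)
  also have "\<dots> = c * (of_nat (n - 1) * H $ (n - 1))"
    using n2 by (simp add: Suc_diff_Suc numeral_2_eq_2)
  finally have eq: "of_nat n * G $ n = c * (of_nat (n - 1) * H $ (n - 1))" .
  have "norm (of_nat n * G $ n) = norm (c * (of_nat (n - 1) * H $ (n - 1)))" by (simp only: eq)
  hence "real n * norm (G $ n) = real (n - 1) * norm (H $ (n - 1))"
    by (simp only: norm_mult norm_of_nat nc mult_1_left)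
  thus ?thesis unfolding taylor_exp[OF Hexp] taylor_exp[OF Gexp] .
qed

lemma A_rel:
  assumes "\<alpha> < 1" "n \<ge> 2"
  shows "(real n - 1) / (real n - 2 * \<alpha>) * A_coef n \<alpha> = real (n - 1) * A_coef (n - 1) \<alpha> / real n"
proof -
  have An: "A_coef n \<alpha> = A_coef (n - 1) \<alpha> * (real n - 2*\<alpha>) / real n"
    using A_coef_Suc[of "n-1" \<alpha>] assms by (simp add: of_nat_diff)
  have pos: "real n - 2 * \<alpha> > 0" using assms by simp
  show ?thesis unfolding An using pos assms by (simp add: of_nat_diff field_simps)
qed

lemma Re_frac: "norm (w::complex) < 1 \<Longrightarrow> Re (w / (1 - w)) > - 1/2"
proof -
  assume w: "norm w < 1"
  define x where "x = Re w"
  define y where "y = Im w"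
  have "norm w * norm w < 1 * 1" by (rule mult_strict_mono) (use w in auto)
  hence xy: "x^2 + y^2 < 1" unfolding x_def y_def cmod_power2[symmetric] by (simp add: power2_eq_square)
  have "Re (w / (1 - w)) = (x * (1 - x) - y * y) / ((1 - x)^2 + y^2)"
    unfolding Re_divide x_def y_def by (simp add: power2_eq_square)
  moreover have den: "(1 - x)^2 + y^2 > 0"
  proof -
    have "x^2 < 1" using xy by (smt (verit) zero_le_power2)
    hence "\<bar>x\<bar> < 1" by (simp add: abs_square_less_1)
    hence "(1 - x)^2 > 0" by simp
    thus ?thesis by (smt (verit) zero_le_power2)
  qed
  moreover have "x * (1 - x) - y * y > - 1/2 * ((1 - x)^2 + y^2)"
    using xy by (simp add: power2_eq_square algebra_simps)
  ultimately show ?thesis by (simp add: pos_less_divide_eq)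
qed





lemma h_ext_hol: "h_ext a holomorphic_on ball 0 1"
  unfolding holomorphic_on_open[OF open_ball] using h_ext_deriv by blast

lemma g_ext_hol: "g_ext a holomorphic_on ball 0 1"
  unfolding holomorphic_on_open[OF open_ball] using g_ext_deriv by blast

lemma h_ext_0: "h_ext a 0 = 0" by (simp add: h_ext_def)
lemma g_ext_0: "g_ext a 0 = 0" by (simp add: g_ext_def)

lemma deriv_h_ext: "z \<in> ball 0 1 \<Longrightarrow> deriv (h_ext a) z = Ef a z"
  by (rule DERIV_imp_deriv[OF h_ext_deriv])

lemma deriv_g_ext: "z \<in> ball 0 1 \<Longrightarrow> deriv (g_ext a) z = z * Ef a z"
  by (rule DERIV_imp_deriv[OF g_ext_deriv])

lemma deriv_Ef: "z \<in> ball 0 1 \<Longrightarrow> deriv (Ef a) z = of_real (2 - 2*a) * Ef a z / (1 - z)"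
  by (rule DERIV_imp_deriv[OF Ef_deriv])

lemma deriv2_h_ext: "z \<in> ball 0 1 \<Longrightarrow> deriv (deriv (h_ext a)) z = of_real (2 - 2*a) * Ef a z / (1 - z)"
proof -
  assume z: "z \<in> ball 0 1"
  have "eventually (\<lambda>w. w \<in> ball 0 1) (nhds z)" using z by (intro eventually_nhds_in_open) auto
  hence "eventually (\<lambda>w. deriv (h_ext a) w = Ef a w) (nhds z)"
    by (rule eventually_mono) (simp add: deriv_h_ext)
  hence "deriv (deriv (h_ext a)) z = deriv (Ef a) z" by (rule deriv_cong_ev) simp
  thus ?thesis using deriv_Ef[OF z] by simp
qed

lemma h_ext_coeff:
  assumes a1: "a < 1" and n: "n \<ge> 1"
  shows "fps_expansion (h_ext a) 0 $ n = of_real (A_coef n a)"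
proof -
  define H where "H = fps_expansion (h_ext a) 0"
  have Hexp: "h_ext a has_fps_expansion H" unfolding H_def by (rule hol_fps[OF h_ext_hol])
  define k where "k = (of_real (2 - 2*a) :: complex)"
  have rel: "(fps_const 1 - fps_X) * fps_deriv (fps_deriv H) = fps_const k * fps_deriv H"
  proof (rule fps_uniq)
    show "(\<lambda>z. (1 - z) * deriv (deriv (h_ext a)) z) has_fps_expansion (fps_const 1 - fps_X) * fps_deriv (fps_deriv H)"
      by (intro has_fps_expansion_mult has_fps_expansion_diff has_fps_expansion_const has_fps_expansion_fps_X has_fps_expansion_deriv Hexp)
    show "(\<lambda>z. k * deriv (h_ext a) z) has_fps_expansion fps_const k * fps_deriv H"
      by (intro has_fps_expansion_cmult_left has_fps_expansion_deriv Hexp)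
    show "\<forall>\<^sub>F z in nhds 0. (1 - z) * deriv (deriv (h_ext a)) z = k * deriv (h_ext a) z"
      by (rule ball_ev[of 1]) (use nz1 in \<open>auto simp: deriv2_h_ext deriv_h_ext k_def\<close>)
  qed
  hence rel2: "fps_deriv (fps_deriv H) - fps_X * fps_deriv (fps_deriv H) = fps_const k * fps_deriv H"
    by (simp add: algebra_simps)
  have e: "(fps_deriv (fps_deriv H) - fps_X * fps_deriv (fps_deriv H)) $ m = (fps_const k * fps_deriv H) $ m" for m
    by (simp only: rel2)
  have H1: "H $ 1 = 1"
    using fps_nth_fps_expansion[OF Hexp, of 1] deriv_h_ext[of 0 a] by (simp add: Ef0)
  have step: "of_nat (Suc j) * H $ Suc j = (of_nat (Suc j) - of_real (2*a)) * H $ j" if j: "j \<ge> 1" for j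
  proof (cases "j = 1")
    case True
    have "2 * H $ 2 = k * H $ 1" using e[of 0] by (simp add: numeral_2_eq_2)
    thus ?thesis using True by (simp add: k_def numeral_2_eq_2 algebra_simps)
  next
    case False
    define m where "m = j - 2"
    have m: "j = Suc (Suc m)" using j False by (simp add: m_def)
    have "of_nat (Suc (Suc m)) * (of_nat (Suc (Suc (Suc m))) * H $ Suc (Suc (Suc m))) - of_nat (Suc m) * (of_nat (Suc (Suc m)) * H $ Suc (Suc m))
          = k * (of_nat (Suc (Suc m)) * H $ Suc (Suc m))"
      using e[of "Suc m"] by (simp add: algebra_simps)
    hence "of_nat (Suc (Suc m)) * (of_nat (Suc (Suc (Suc m))) * H $ Suc (Suc (Suc m))) =
           of_nat (Suc (Suc m)) * ((of_nat (Suc (Suc (Suc m))) - of_real (2*a)) * H $ Suc (Suc m))"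
      by (simp add: k_def algebra_simps)
    moreover have nz: "(of_nat (Suc (Suc m)) :: complex) \<noteq> 0" by (simp only: of_nat_eq_0_iff)
    ultimately have "of_nat (Suc (Suc (Suc m))) * H $ Suc (Suc (Suc m)) = (of_nat (Suc (Suc (Suc m))) - of_real (2*a)) * H $ Suc (Suc m)"
      using mult_left_cancel[OF nz] by blast
    thus ?thesis using m by simp
  qed
  show ?thesis using n unfolding H_def[symmetric]
  proof (induction n rule: dec_induct)
    case base thus ?case using H1 A_coef_1[of a] by simp
  next
    case (step j)
    have "of_nat (Suc j) * H $ Suc j = (of_nat (Suc j) - of_real (2*a)) * of_real (A_coef j a)"
      using step.IH step(1) \<open>\<And>j. j \<ge> 1 \<Longrightarrow> _\<close> by simp
    also have "\<dots> = of_nat (Suc j) * of_real (A_coef (Suc j) a)"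
    proof -
      have r: "(real (Suc j) - 2*a) * A_coef j a = real (Suc j) * A_coef (Suc j) a"
        using A_coef_Suc[OF step(1), of a] by (simp add: field_simps)
      have "(of_real ((real (Suc j) - 2*a) * A_coef j a) :: complex) = of_real (real (Suc j) * A_coef (Suc j) a)"
        by (simp only: r)
      thus ?thesis by simp
    qed
    finally have "of_nat (Suc j) * H $ Suc j = of_nat (Suc j) * of_real (A_coef (Suc j) a)" .
    moreover have nz: "(of_nat (Suc j) :: complex) \<noteq> 0" by (simp only: of_nat_eq_0_iff)
    ultimately show ?case using mult_left_cancel[OF nz] by blast
  qed
qed

lemma alg2: "(E::complex) \<noteq> 0 \<Longrightarrow> z * (k * E / d * (u * 1)) / E = k * (u * z / d)"
  by (simp add: divide_inverse)

lemma Re_ofreal_mult: "Re (complex_of_real r * x) = r * Re x"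
  by simp

lemma rot_props:
  fixes \<phi> :: real and a :: real
  assumes a0: "0 \<le> a" and a1: "a < 1"
  defines "hr \<equiv> (\<lambda>z. exp (- \<i> * of_real \<phi>) * h_ext a (exp (\<i> * of_real \<phi>) * z))"
      and "gr \<equiv> (\<lambda>z. exp (\<i> * of_real \<phi>) * g_ext a (exp (\<i> * of_real \<phi>) * z))"
  shows "in_F a hr gr \<and>
         (\<forall>n::nat. n \<ge> 2 \<longrightarrow>
            norm (taylor_coeff hr n) = A_coef n a \<and>
            norm (taylor_coeff gr n) = (real n - 1) / (real n - 2 * a) * A_coef n a)"
proof -
  define u where "u = exp (\<i> * of_real \<phi>)"
  define v where "v = exp (- \<i> * of_real \<phi>)"
  have nu: "norm u = 1" by (simp add: u_def norm_exp_eq_Re)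
  have nv: "norm v = 1" by (simp add: v_def norm_exp_eq_Re)
  have vu: "v * u = 1" by (simp add: u_def v_def exp_add[symmetric])
  have hr_def': "hr = (\<lambda>z. v * h_ext a (u * z))" unfolding hr_def u_def v_def ..
  have gr_def': "gr = (\<lambda>z. u * g_ext a (u * z))" unfolding gr_def u_def ..
  have uz: "u * z \<in> ball 0 1" if "z \<in> ball 0 1" for z using that by (simp add: norm_mult nu)
  have dhr: "(hr has_field_derivative Ef a (u * z)) (at z)" if z: "z \<in> ball 0 1" for z
  proof -
    have d: "((\<lambda>z. v * h_ext a (u * z)) has_field_derivative v * (Ef a (u * z) * (u * 1))) (at z)"
      by (intro DERIV_cmult DERIV_chain2[where f="h_ext a" and g="\<lambda>z. u * z", OF h_ext_deriv[OF uz[OF z]]] DERIV_ident)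
    have eq: "v * (Ef a (u * z) * (u * 1)) = Ef a (u * z)" using vu by (simp add: algebra_simps)
    show ?thesis using d unfolding eq hr_def' .
  qed
  have dgr: "(gr has_field_derivative u * (u * z * Ef a (u * z) * (u * 1))) (at z)" if z: "z \<in> ball 0 1" for z
    unfolding gr_def'
    by (intro DERIV_cmult DERIV_chain2[where f="g_ext a" and g="\<lambda>z. u * z", OF g_ext_deriv[OF uz[OF z]]] DERIV_ident)
  have holhr: "hr holomorphic_on ball 0 1"
    unfolding holomorphic_on_open[OF open_ball] using dhr by blast
  have holgr: "gr holomorphic_on ball 0 1"
    unfolding holomorphic_on_open[OF open_ball] using dgr by blast
  have derhr: "deriv hr z = Ef a (u * z)" if "z \<in> ball 0 1" for z
    by (rule DERIV_imp_deriv[OF dhr[OF that]])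
  have dergr: "deriv gr z = u * (u * z * Ef a (u * z) * (u * 1))" if "z \<in> ball 0 1" for z
    by (rule DERIV_imp_deriv[OF dgr[OF that]])
  have der2hr: "deriv (deriv hr) z = of_real (2 - 2*a) * Ef a (u * z) / (1 - u * z) * (u * 1)" if z: "z \<in> ball 0 1" for z
  proof -
    have "eventually (\<lambda>w. w \<in> ball 0 1) (nhds z)" using z by (intro eventually_nhds_in_open) auto
    hence "eventually (\<lambda>w. deriv hr w = Ef a (u * w)) (nhds z)"
      by (rule eventually_mono) (simp add: derhr)
    hence "deriv (deriv hr) z = deriv (\<lambda>w. Ef a (u * w)) z" by (rule deriv_cong_ev) simp
    also have "\<dots> = of_real (2 - 2*a) * Ef a (u * z) / (1 - u * z) * (u * 1)"
      by (rule DERIV_imp_deriv, intro DERIV_chain2[where f="Ef a" and g="\<lambda>z. u * z", OF Ef_deriv[OF uz[OF z]]] DERIV_cmult DERIV_ident)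
    finally show ?thesis .
  qed
  have th3: "exp (\<i> * of_real (3 * \<phi>)) = u * u * u"
  proof -
    have "exp (\<i> * of_real (3 * \<phi>)) = exp (of_nat 3 * (\<i> * of_real \<phi>))" by (simp add: algebra_simps)
    also have "\<dots> = u ^ 3" unfolding u_def by (rule exp_of_nat_mult)
    finally show ?thesis by (simp add: power3_eq_cube)
  qed
  have inF: "in_F a hr gr"
    unfolding in_F_def
  proof (intro conjI ballI)
    show "hr holomorphic_on ball 0 1" by (rule holhr)
    show "gr holomorphic_on ball 0 1" by (rule holgr)
    show "hr 0 = 0" by (simp add: hr_def' h_ext_0)
    show "gr 0 = 0" by (simp add: gr_def' g_ext_0)
    show "deriv hr 0 = 1" using derhr[of 0] by (simp add: Ef0)
  next
    fix z :: complex assume z: "z \<in> ball 0 1"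
    show "deriv hr z \<noteq> 0" using derhr[OF z] Ef_nz[OF uz[OF z]] by simp
    have e: "z * deriv (deriv hr) z / deriv hr z = of_real (2 - 2*a) * ((u * z) / (1 - u * z))"
      unfolding derhr[OF z] der2hr[OF z] by (rule alg2[OF Ef_nz[OF uz[OF z]]])
    have "Re ((u * z) / (1 - u * z)) > - 1/2" using uz[OF z] by (intro Re_frac) simp
    hence "Re (1 + z * deriv (deriv hr) z / deriv hr z) = 1 + (2 - 2*a) * Re ((u * z) / (1 - u * z))"
      unfolding e by (simp only: plus_complex.sel one_complex.sel Re_ofreal_mult)
    moreover have "(2 - 2*a) * Re ((u * z) / (1 - u * z)) > (2 - 2*a) * (- 1/2)"
      using \<open>Re ((u * z) / (1 - u * z)) > - 1/2\<close> a1 by (intro mult_strict_left_mono) auto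
    ultimately show "Re (1 + z * deriv (deriv hr) z / deriv hr z) > a" by (simp add: field_simps)
  next
    show "\<exists>\<theta>::real. \<forall>z\<in>ball 0 1. deriv gr z = exp (\<i> * of_real \<theta>) * z * deriv hr z"
    proof (intro exI ballI)
      fix z :: complex assume z: "z \<in> ball 0 1"
      show "deriv gr z = exp (\<i> * of_real (3 * \<phi>)) * z * deriv hr z"
        unfolding dergr[OF z] derhr[OF z] th3 by (simp add: algebra_simps)
    qed
  qed
  define Hf where "Hf = fps_expansion (h_ext a) 0"
  have hrexp: "hr has_fps_expansion fps_const v * Abs_fps (\<lambda>m. u^m * Hf $ m)"
    unfolding hr_def' Hf_def
    by (intro has_fps_expansion_cmult_left fps_scale_exp h_ext_hol) (simp add: nu)
  have hrc: "norm (taylor_coeff hr n) = A_coef n a" if "n \<ge> 1" for n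
  proof -
    have "taylor_coeff hr n = v * (u^n * Hf $ n)" using taylor_exp[OF hrexp, of n] by simp
    hence "norm (taylor_coeff hr n) = norm (Hf $ n)" by (simp add: norm_mult norm_power nu nv)
    also have "\<dots> = A_coef n a" using h_ext_coeff[OF a1 that] A_coef_pos[OF a1 that] by (simp add: Hf_def)
    finally show ?thesis .
  qed
  show ?thesis
  proof (intro conjI allI impI inF)
    fix n :: nat assume n2: "n \<ge> 2"
    show "norm (taylor_coeff hr n) = A_coef n a" using hrc n2 by simp
    have "real n * norm (taylor_coeff gr n) = real (n - 1) * A_coef (n - 1) a"
      using g_coeff_eq[OF inF n2] hrc[of "n - 1"] n2 by simp
    hence "norm (taylor_coeff gr n) = real (n - 1) * A_coef (n - 1) a / real n"
      using n2 by (simp add: field_simps)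
    thus "norm (taylor_coeff gr n) = (real n - 1) / (real n - 2 * a) * A_coef n a"
      using A_rel[OF a1 n2] by simp
  qed
qed


theorem theorem2:
  fixes \<alpha> :: real
  assumes "0 \<le> \<alpha>" and "\<alpha> < 1"
  shows "(\<forall>h g. in_F \<alpha> h g \<longrightarrow>
            (\<forall>n::nat. n \<ge> 2 \<longrightarrow>
               norm (taylor_coeff h n) \<le> A_coef n \<alpha> \<and>
               norm (taylor_coeff g n) \<le> (real n - 1) / (real n - 2 * \<alpha>) * A_coef n \<alpha>))
       \<and> (\<forall>\<phi>::real.
            let hr = (\<lambda>z. exp (- \<i> * of_real \<phi>) * h_ext \<alpha> (exp (\<i> * of_real \<phi>) * z));
                gr = (\<lambda>z. exp (\<i> * of_real \<phi>) * g_ext \<alpha> (exp (\<i> * of_real \<phi>) * z))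
            in in_F \<alpha> hr gr \<and>
               (\<forall>n::nat. n \<ge> 2 \<longrightarrow>
                  norm (taylor_coeff hr n) = A_coef n \<alpha> \<and>
                  norm (taylor_coeff gr n) = (real n - 1) / (real n - 2 * \<alpha>) * A_coef n \<alpha>))"
  proof (rule conjI)
  show "\<forall>h g. in_F \<alpha> h g \<longrightarrow>
            (\<forall>n::nat. n \<ge> 2 \<longrightarrow>
               norm (taylor_coeff h n) \<le> A_coef n \<alpha> \<and>
               norm (taylor_coeff g n) \<le> (real n - 1) / (real n - 2 * \<alpha>) * A_coef n \<alpha>)"
  proof (intro allI impI conjI)
    fix h g and n :: nat assume F: "in_F \<alpha> h g" and n2: "n \<ge> 2"
    show "norm (taylor_coeff h n) \<le> A_coef n \<alpha>"
      using h_bound[OF F assms] n2 unfolding taylor_fps by simp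
    show "norm (taylor_coeff g n) \<le> (real n - 1) / (real n - 2 * \<alpha>) * A_coef n \<alpha>"
      using g_bound[OF F assms n2] unfolding taylor_fps .
  qed
next
  show "\<forall>\<phi>::real.
            let hr = (\<lambda>z. exp (- \<i> * of_real \<phi>) * h_ext \<alpha> (exp (\<i> * of_real \<phi>) * z));
                gr = (\<lambda>z. exp (\<i> * of_real \<phi>) * g_ext \<alpha> (exp (\<i> * of_real \<phi>) * z))
            in in_F \<alpha> hr gr \<and>
               (\<forall>n::nat. n \<ge> 2 \<longrightarrow>
                  norm (taylor_coeff hr n) = A_coef n \<alpha> \<and>
                  norm (taylor_coeff gr n) = (real n - 1) / (real n - 2 * \<alpha>) * A_coef n \<alpha>)"
  proof
    fix \<phi> :: real
    show "let hr = (\<lambda>z. exp (- \<i> * of_real \<phi>) * h_ext \<alpha> (exp (\<i> * of_real \<phi>) * z));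
                gr = (\<lambda>z. exp (\<i> * of_real \<phi>) * g_ext \<alpha> (exp (\<i> * of_real \<phi>) * z))
            in in_F \<alpha> hr gr \<and>
               (\<forall>n::nat. n \<ge> 2 \<longrightarrow>
                  norm (taylor_coeff hr n) = A_coef n \<alpha> \<and>
                  norm (taylor_coeff gr n) = (real n - 1) / (real n - 2 * \<alpha>) * A_coef n \<alpha>)"
      unfolding Let_def by (rule rot_props[OF assms])
  qed
qed

end
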